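(* Let $q$ be a power of $2$ and $k\ge 1$ an integer, and let $S_{2k}=x+x^q+\cdots+x^{q^{2k-1}}\in\mathbb{F}_2[x]$. Let $L\in\mathbb{F}_{q^{3k}}[x]$ be a $2$-linearized polynomial (i.e. $L=\sum_i a_i x^{2^i}$ with $a_i\in\mathbb{F}_{q^{3k}}$) such that (i) $L$ permutes $\mathbb{F}_{q^k}$ (that is, $x\mapsto L(x)$ is a bijection $\mathbb{F}_{q^k}\to\mathbb{F}_{q^k}$), and (ii) $L(x)+L(x)^{q^{2k}}\equiv S_{2k}(x)^4 \pmod{x^{q^{3k}}-x}$. Then $L(x)+S_{2k}(x)^{q^k+3}$ is a permutation polynomial of $\mathbb{F}_{q^{3k}}$.
   Context: $\mathbb{F}_m$ denotes the finite field with $m$ elements. A polynomial $f\in\mathbb{F}_m[x]$ is a permutation polynomial of $\mathbb{F}_m$ if the induced map $x\mapsto f(x)$ is a bijection of $\mathbb{F}_m$. Here $\mathbb{F}_{q^k}\subset\mathbb{F}_{q^{3k}}$ is the subfield of order $q^k$. *)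

theory Defs
  imports "HOL-Computational_Algebra.Polynomial"
begin

definition subfield_of_order :: "nat \<Rightarrow> 'a::field set" where
  "subfield_of_order m = {x. x ^ m = x}"

definition two_linearized :: "'a::comm_ring_1 poly \<Rightarrow> bool" where
  "two_linearized L \<longleftrightarrow> (\<forall>n. coeff L n \<noteq> 0 \<longrightarrow> (\<exists>i. n = 2 ^ i))"

definition permutation_poly :: "'a::field poly \<Rightarrow> bool" where
  "permutation_poly f \<longleftrightarrow> bij (poly f)"

definition trace_poly :: "nat \<Rightarrow> nat \<Rightarrow> 'a::comm_ring_1 poly" where
  "trace_poly q m = (\<Sum>j<m. monom 1 (q ^ j))"

end

theory Submission
  imports Defs
begin

lemma card_zero: "of_nat (card (UNIV::'a::{field,finite} set)) = (0::'a)"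
proof -
  have "(\<Sum>y\<in>UNIV. y + 1) = (\<Sum>y\<in>(UNIV::'a set). y)"
    by (rule sum.reindex_bij_witness[of _ "\<lambda>y. y - 1" "\<lambda>y. y + 1"]) auto
  then show ?thesis by (simp add: sum.distrib)
qed

lemma char2: assumes "card (UNIV::'a::{field,finite} set) = 2 ^ m" "m \<ge> 1"
  shows "(2::'a) = 0"
proof -
  have "(2::'a) ^ m = 0" using card_zero[where 'a='a] assms(1) by simp
  then show ?thesis by simp
qed

lemma fermat_ff: "(x::'a::{field,finite}) ^ card (UNIV::'a set) = x"
proof (cases "x = 0")
  case True then show ?thesis by (simp add: finite_UNIV_card_ge_0)
next
  case False
  let ?A = "UNIV - {0::'a}"
  have "(\<Prod>y\<in>?A. x * y) = (\<Prod>y\<in>?A. y)"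
    by (rule prod.reindex_bij_witness[of _ "\<lambda>y. y / x" "\<lambda>y. x * y"]) (use False in auto)
  then have "x ^ card ?A * (\<Prod>y\<in>?A. y) = 1 * (\<Prod>y\<in>?A. y)"
    by (simp add: prod.distrib)
  moreover have "(\<Prod>y\<in>?A. y) \<noteq> 0" by simp
  ultimately have "x ^ card ?A = 1" by (metis mult_cancel_right)
  moreover have "card ?A + 1 = card (UNIV::'a set)"
    by (simp add: card_Diff_singleton finite_UNIV_card_ge_0 Suc_leI)
  ultimately show ?thesis by (metis power_Suc2 Suc_eq_plus1 mult_1)
qed

lemma c2_add_self: "(2::'a::comm_ring_1) = 0 \<Longrightarrow> a + a = (0::'a)"
  by (metis mult_2 mult_zero_left)

lemma c2_eq: "(2::'a::comm_ring_1) = 0 \<Longrightarrow> a + b = 0 \<longleftrightarrow> a = (b::'a)"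
  by (metis add_diff_cancel_right' c2_add_self diff_zero)

lemma c2_minus: "(2::'a::comm_ring_1) = 0 \<Longrightarrow> a - b = a + (b::'a)"
  by (metis add_diff_cancel_right' c2_add_self diff_diff_eq2 diff_zero add.commute)

lemma frob: assumes "(2::'a::comm_ring_1) = 0"
  shows "(a + b) ^ (2 ^ n) = a ^ (2 ^ n) + (b::'a) ^ (2 ^ n)"
proof (induction n)
  case 0 then show ?case by simp
next
  case (Suc n)
  have sq: "(c + d)^2 = c^2 + (d::'a)^2" for c d
    using assms by (simp add: power2_sum)
  have "(a + b) ^ (2 ^ Suc n) = ((a+b) ^ (2^n))^2" by (simp add: power_mult[symmetric] mult.commute)
  also have "\<dots> = a ^ (2 ^ Suc n) + b ^ (2 ^ Suc n)"
    by (simp add: Suc sq power_mult[symmetric] mult.commute)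
  finally show ?case .
qed

lemma frob_sum: assumes "(2::'a::comm_ring_1) = 0"
  shows "(\<Sum>i\<in>A. f i) ^ (2 ^ n) = (\<Sum>i\<in>A. (f i :: 'a) ^ (2 ^ n))"
proof (cases "finite A")
  case True then show ?thesis
    by (induction A rule: finite_induct) (simp_all add: frob[OF assms] power_0_left)
qed (simp add: power_0_left)

lemma sum_split_add: "(\<Sum>j<a+(b::nat). f j) = (\<Sum>j<a. f j) + (\<Sum>j<b. (f (j+a) :: 'a::comm_monoid_add))"
  by (induction b) (simp_all add: add_ac)

lemma poly_lin_add: assumes "(2::'a::comm_ring_1) = 0"
  and "\<forall>n. coeff L n \<noteq> 0 \<longrightarrow> (\<exists>i. n = 2 ^ i)"
  shows "poly L (a + b) = poly L a + poly L (b::'a)"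
proof -
  have t: "coeff L i * (a+b)^i = coeff L i * a^i + coeff L i * b^i" for i
  proof (cases "coeff L i = 0")
    case False
    then obtain j where "i = 2^j" using assms(2) by blast
    then show ?thesis by (simp add: frob[OF assms(1)] distrib_left)
  qed simp
  show ?thesis by (simp add: poly_altdef t sum.distrib)
qed

lemma pow_inj_aux:
  assumes c2: "(2::'a::{field,finite}) = 0" and N: "card (UNIV::'a set) = N1 * N1 * N1" and N1: "N1 \<ge> 1"
    and eq: "a ^ (N1 + 1) = (b::'a) ^ (N1 + 1)"
  shows "a = b"
proof -
  obtain M where M: "N1 = Suc M" using N1 by (cases N1) auto
  have ex: "(N1 + 1) * (N1 * M + 1) = N1 * N1 * N1 + 1"
    unfolding M by (simp add: algebra_simps)
  have "a ^ ((N1 + 1) * (N1 * M + 1)) = b ^ ((N1 + 1) * (N1 * M + 1))"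
    by (simp only: power_mult eq)
  then have "a ^ (card (UNIV::'a set) + 1) = b ^ (card (UNIV::'a set) + 1)"
    by (simp only: ex N)
  then have "a ^ card (UNIV::'a set) * a = b ^ card (UNIV::'a set) * b"
    by (simp only: power_add power_one_right)
  then have "a * a = b * b" by (simp only: fermat_ff)
  then have "(a + b) ^ 2 = a * a + a * a + 2 * (a * b)"
    by (simp add: power2_eq_square algebra_simps)
  then have "(a + b) ^ 2 = 0"
    using c2 by (simp add: c2_add_self[OF c2])
  then show ?thesis using c2_eq[OF c2] by simp
qed

theorem theorem3p1:
  fixes L :: "'a::{field,finite} poly" and q k e :: nat
  assumes q: "q = 2 ^ e" and e: "e \<ge> 1" and k: "k \<ge> 1"
    and card: "card (UNIV :: 'a set) = q ^ (3 * k)"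
    and lin: "two_linearized L"
    and perm_sub: "bij_betw (poly L) (subfield_of_order (q ^ k)) (subfield_of_order (q ^ k))"
    and cong: "(monom 1 (q ^ (3 * k)) - monom 1 1) dvd
                 (L + L ^ (q ^ (2 * k)) - (trace_poly q (2 * k)) ^ 4)"
  shows "permutation_poly (L + (trace_poly q (2 * k)) ^ (q ^ k + 3))"
proof -
  define N1 where "N1 = q ^ k"
  define N2 where "N2 = q ^ (2 * k)"
  define N3 where "N3 = q ^ (3 * k)"
  have qpow: "q ^ j = 2 ^ (e * j)" for j by (simp add: q power_mult)
  have c2: "(2::'a) = 0"
    using char2[of "e * (3 * k)"] card e k qpow by simp
  have fq: "(a + b) ^ (q ^ j) = a ^ (q ^ j) + (b::'a) ^ (q ^ j)" for a b j
    unfolding qpow by (rule frob[OF c2])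
  have fqs: "(\<Sum>i\<in>A. f i) ^ (q ^ j) = (\<Sum>i\<in>A. (f i :: 'a) ^ (q ^ j))" for A f j
    unfolding qpow by (rule frob_sum[OF c2])
  have N21: "N2 = N1 * N1" unfolding N1_def N2_def by (simp add: power_add[symmetric] mult_2)
  have N31: "N3 = N1 * N2" unfolding N1_def N2_def N3_def by (simp add: power_add[symmetric])
  have N1p: "N1 \<ge> 1" unfolding N1_def q by simp
  have fer: "x ^ N3 = (x::'a)" for x using fermat_ff[of x] card N3_def by simp
  define S where "S x = (\<Sum>j<2*k. x ^ (q ^ j))" for x :: 'a
  have polyT: "poly (trace_poly q m) x = (\<Sum>j<m. x ^ (q ^ j))" for m x
    by (simp add: trace_poly_def poly_sum poly_monom)
  have Sadd: "S (a + b) = S a + S b" for a b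
    by (simp add: S_def fq sum.distrib)
  have Ladd: "poly L (a + b) = poly L a + poly L b" for a b
    using poly_lin_add[OF c2] lin unfolding two_linearized_def by blast
  have L0: "poly L 0 = 0" using Ladd[of 0 0] by (metis add.right_neutral add_left_cancel)
  have condL: "poly L x + poly L x ^ N2 = S x ^ 4" for x
  proof -
    obtain r where r: "L + L ^ (q ^ (2 * k)) - (trace_poly q (2 * k)) ^ 4
        = (monom 1 (q ^ (3 * k)) - monom 1 1) * r" using cong by (auto elim: dvdE)
    have "poly (monom 1 (q ^ (3 * k)) - monom 1 1) x = 0"
      using fer[of x] by (simp add: poly_monom N3_def)
    then have "poly (L + L ^ (q ^ (2 * k)) - (trace_poly q (2 * k)) ^ 4) x = 0"
      by (simp add: r)
    then show ?thesis by (simp add: polyT S_def N2_def poly_power)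
  qed
  have Str: "S x + S x ^ N1 + S x ^ N2 = 0" for x
  proof -
    define u where "u = (\<Sum>j<k. x ^ (q ^ j))"
    have u1: "u ^ N1 = (\<Sum>j<k. x ^ (q ^ (j + k)))"
      unfolding u_def N1_def fqs by (simp add: power_mult[symmetric] power_add)
    have Su0: "S x = u + (\<Sum>j<k. x ^ (q ^ (j + k)))"
      unfolding S_def u_def using sum_split_add[of "\<lambda>j. x ^ (q ^ j)" k k]
      by (simp add: mult_2)
    have Su: "S x = u + u ^ N1" using Su0 u1 by simp
    have SN1: "S x ^ N1 = u ^ N1 + u ^ N2"
      unfolding Su N1_def fq by (simp add: N21 N1_def power_mult)
    have SN2: "S x ^ N2 = u ^ N2 + u"
    proof -
      have "S x ^ N2 = u ^ N2 + (u ^ N1) ^ N2" unfolding Su N2_def fq ..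
      also have "(u ^ N1) ^ N2 = u" by (simp add: power_mult[symmetric] N31[symmetric] fer)
      finally show ?thesis .
    qed
    have "S x + S x ^ N1 + S x ^ N2 = (u + u ^ N1 + u ^ N2) + (u + u ^ N1 + u ^ N2)"
      by (subst SN1, subst SN2, subst Su) (simp add: algebra_simps)
    also have "\<dots> = 0" by (rule c2_add_self[OF c2])
    finally show ?thesis .
  qed
  have Sker: "S d = 0 \<Longrightarrow> d ^ N1 = d" for d
  proof -
    assume S0: "S d = 0"
    define g where "g j = d ^ (q ^ j)" for j
    have "S d ^ q = (\<Sum>j<2*k. g (Suc j))"
      unfolding S_def using fqs[of "\<lambda>j. d ^ (q ^ j)" "{..<2*k}" 1]
      by (simp add: g_def power_mult[symmetric] mult.commute)
    moreover have "(\<Sum>j<Suc (2*k). g j) = g 0 + (\<Sum>j<2*k. g (Suc j))"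
      by (rule sum.lessThan_Suc_shift)
    moreover have "(\<Sum>j<Suc (2*k). g j) = S d + g (2*k)"
      by (simp add: S_def g_def)
    ultimately have "g 0 + S d ^ q = S d + g (2*k)" by simp
    then have "d = d ^ N2" using S0 by (simp add: g_def N2_def q power_0_left)
    then have "d ^ N1 = (d ^ N2) ^ N1" by simp
    also have "\<dots> = d" using fer[of d] by (simp add: power_mult[symmetric] N31 mult.commute)
    finally show ?thesis .
  qed
  have Gy: "y ^ (N1 + 3) + (y ^ (N1 + 3)) ^ N2 = y ^ 4 + y ^ ((N1 + 1) * (N1 + 1))"
    if ytr: "y + y ^ N1 + y ^ N2 = 0" for y :: 'a
  proof -
    define w where "w = y ^ N1"
    have v: "y ^ N2 = y + w" using ytr c2_eq[OF c2, of "y + y ^ N1" "y ^ N2"] c2_minus[OF c2]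
      by (simp add: w_def add.assoc)
    have e1: "(y ^ (N1 + 3)) ^ N2 = y * (y + w) ^ 3"
    proof -
      have "(y ^ (N1 + 3)) ^ N2 = y ^ (N1 * N2) * (y ^ N2) ^ 3"
        by (simp add: power_add power_mult[symmetric] mult.commute power_mult_distrib)
      then show ?thesis by (simp add: N31[symmetric] fer v)
    qed
    have e2: "y ^ ((N1 + 1) * (N1 + 1)) = (y + w) * w ^ 2 * y"
    proof -
      have "(N1 + 1) * (N1 + 1) = N2 + 2 * N1 + 1" by (simp add: N21 algebra_simps)
      then have "y ^ ((N1 + 1) * (N1 + 1)) = y ^ N2 * (y ^ N1) ^ 2 * y"
        by (simp only: power_add power_mult power_one_right mult.commute[of 2])
      then show ?thesis by (simp add: v w_def)
    qed
    have "y ^ (N1 + 3) + (y ^ (N1 + 3)) ^ N2 = w * y ^ 3 + y * (y + w) ^ 3"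
      unfolding e1 by (simp add: w_def power_add)
    also have "\<dots> = (y ^ 4 + (y + w) * w ^ 2 * y) + 2 * (2 * y ^ 3 * w + y ^ 2 * w ^ 2)"
      by (simp add: algebra_simps power2_eq_square power3_eq_cube eval_nat_numeral)
    also have "\<dots> = y ^ 4 + y ^ ((N1 + 1) * (N1 + 1))" unfolding e2 by (simp add: c2)
    finally show ?thesis .
  qed
  define f where "f x = poly L x + S x ^ (N1 + 3)" for x
  have polyf: "poly (L + (trace_poly q (2 * k)) ^ (q ^ k + 3)) = f"
    by (rule ext) (simp add: f_def polyT S_def N1_def poly_power)
  have fG: "f x + f x ^ N2 = (S x ^ (N1 + 1)) ^ (N1 + 1)" for x
  proof -
    have "f x ^ N2 = poly L x ^ N2 + (S x ^ (N1 + 3)) ^ N2"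
      unfolding f_def N2_def fq ..
    then have "f x + f x ^ N2 = (poly L x + poly L x ^ N2) + (S x ^ (N1 + 3) + (S x ^ (N1 + 3)) ^ N2)"
      by (simp add: f_def algebra_simps)
    also have "\<dots> = (S x ^ 4 + S x ^ 4) + S x ^ ((N1 + 1) * (N1 + 1))"
      by (simp add: condL Gy[OF Str] algebra_simps)
    also have "\<dots> = S x ^ ((N1 + 1) * (N1 + 1))" by (simp add: c2_add_self[OF c2])
    finally show ?thesis by (simp only: power_mult)
  qed
  have cardN: "card (UNIV::'a set) = N1 * N1 * N1"
    using card N31 N21 N3_def by simp
  have "inj f"
  proof (rule injI)
    fix x x' assume fx: "f x = f x'"
    then have "(S x ^ (N1 + 1)) ^ (N1 + 1) = (S x' ^ (N1 + 1)) ^ (N1 + 1)"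
      using fG by metis
    then have "S x ^ (N1 + 1) = S x' ^ (N1 + 1)" by (rule pow_inj_aux[OF c2 cardN N1p])
    then have SS: "S x = S x'" by (rule pow_inj_aux[OF c2 cardN N1p])
    define d where "d = x + x'"
    have "S d = 0" using SS by (simp add: d_def Sadd c2_add_self[OF c2])
    then have dsub: "d \<in> subfield_of_order (q ^ k)"
      using Sker unfolding subfield_of_order_def N1_def by simp
    have zsub: "0 \<in> subfield_of_order (q ^ k)"
      unfolding subfield_of_order_def using N1p N1_def q by (simp add: power_0_left)
    have "poly L x = poly L x'" using fx SS by (simp add: f_def)
    then have "poly L d = poly L 0" by (simp add: d_def Ladd L0 c2_add_self[OF c2])
    then have "d = 0" using perm_sub dsub zsub by (metis bij_betw_def inj_onD)
    then show "x = x'" using c2_eq[OF c2] by (simp add: d_def)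
  qed
  then have "bij f" using finite_UNIV_inj_surj[of f] by (simp add: bij_def)
  then show ?thesis unfolding permutation_poly_def polyf .
qed

end
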